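(* Let $k$ be an algebraically closed field of characteristic $p>0$, let $G$ be a finite group, $K$ a subgroup of index $m$, and $W$ a finite-dimensional $kK$-module. Let $g_1 = 1, g_2, \dots, g_m$ be representatives of the left cosets of $K$ in $G$, and let $V = \mathrm{Ind}_K^G(W) = W_1\oplus\cdots\oplus W_m$ with $W_i = g_i\otimes W$. Write $\mathrm{End}_k(V) = \bigoplus_{i,j}\mathrm{Hom}_k(W_i,W_j)$ and let $\pi_{ij}: \mathrm{End}_k(V)\to \mathrm{Hom}_k(W_i,W_j)$ be the corresponding projections. Let $\rho: G\to\mathrm{GL}(V)$ be the representation. If $(G,V)$ is weakly adequate, then for each $j$, the set $\{\pi_{1j}(\rho(g)) : g \in g_jK,\ g \text{ has order prime to } p\}$ spans $\mathrm{Hom}_k(W_1,W_j)$. In particular, if some coset $g_jK$ contains no element of order prime to $p$, then $(G,V)$ is not weakly adequate.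
   Context: $(G,V)$ is weakly adequate if $\mathrm{End}_k(V)$ is spanned by $\{\rho(g): g\in G,\ \rho(g)\text{ semisimple}\}$. *)

theory Defs
  imports "HOL-Computational_Algebra.Polynomial" "HOL-Algebra.Multiplicative_Group"
          "Jordan_Normal_Form.Matrix"
begin

(* A square matrix over an algebraically closed field is semisimple iff it is
   diagonalizable, i.e. similar to a diagonal matrix. *)
definition semisimple_mat :: "'k::field mat \<Rightarrow> bool" where
  "semisimple_mat A \<longleftrightarrow> (\<exists>D. diagonal_mat D \<and> similar_mat A D)"

definition in_span_mat :: "nat \<Rightarrow> 'k::field mat set \<Rightarrow> 'k mat \<Rightarrow> bool" where
  "in_span_mat n S M \<longleftrightarrow>
     (\<exists>xs :: ('k \<times> 'k mat) list. set (map snd xs) \<subseteq> S \<and>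
        M = foldr (\<lambda>(c, A) B. c \<cdot>\<^sub>m A + B) xs (0\<^sub>m n n))"

definition spans_mat :: "nat \<Rightarrow> 'k::field mat set \<Rightarrow> bool" where
  "spans_mat n S \<longleftrightarrow> (\<forall>M \<in> carrier_mat n n. in_span_mat n S M)"

(* Matrix of the induced representation Ind_H^G(W) on V = W_0 + ... + W_{m-1},
   W_i = g_i \<otimes> W (coordinates of W_i are indices i*d .. i*d+d-1), where
   sigma : H -> GL_d(k) is the representation on W and g_0,...,g_{m-1} are left coset
   representatives.  x (g_i \<otimes> w) = g_j \<otimes> sigma(g_j^{-1} x g_i) w, where x g_i \<in> g_j H. *)
definition ind_rep ::
  "('g, 'b) monoid_scheme \<Rightarrow> 'g set \<Rightarrow> ('g \<Rightarrow> 'k::field mat) \<Rightarrow> (nat \<Rightarrow> 'g) \<Rightarrow> nat \<Rightarrow> nat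
     \<Rightarrow> 'g \<Rightarrow> 'k mat" where
  "ind_rep G H \<sigma> g m d x =
     mat (m * d) (m * d) (\<lambda>(r, c).
       let j = r div d; i = c div d; y = inv\<^bsub>G\<^esub> (g j) \<otimes>\<^bsub>G\<^esub> x \<otimes>\<^bsub>G\<^esub> g i
       in if y \<in> H then \<sigma> y $$ (r mod d, c mod d) else 0)"

(* projection pi_{ij} : End(V) -> Hom(W_i, W_j): the (j,i) block *)
definition block_proj :: "nat \<Rightarrow> nat \<Rightarrow> nat \<Rightarrow> 'k::field mat \<Rightarrow> 'k mat" where
  "block_proj d i j A = mat d d (\<lambda>(r, c). A $$ (j * d + r, i * d + c))"

definition weakly_adequate :: "('g, 'b) monoid_scheme \<Rightarrow> nat \<Rightarrow> ('g \<Rightarrow> 'k::field mat) \<Rightarrow> bool" where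
  "weakly_adequate G n \<rho> \<longleftrightarrow>
     spans_mat n {\<rho> x | x. x \<in> carrier G \<and> semisimple_mat (\<rho> x)}"

end

theory Submission
  imports Defs
begin


locale indrep =
  fixes G :: "('g, 'b) monoid_scheme" and H :: "'g set"
    and \<sigma> :: "'g \<Rightarrow> 'k::field mat"
    and g :: "nat \<Rightarrow> 'g" and m d :: nat
  assumes grp: "group G"
    and sub: "subgroup H G"
    and rep_dim: "\<forall>h \<in> H. \<sigma> h \<in> carrier_mat d d"
    and rep_one: "\<sigma> \<one>\<^bsub>G\<^esub> = 1\<^sub>m d"
    and rep_mult: "\<forall>h1 \<in> H. \<forall>h2 \<in> H. \<sigma> (h1 \<otimes>\<^bsub>G\<^esub> h2) = \<sigma> h1 * \<sigma> h2"
    and g_carrier: "\<forall>i < m. g i \<in> carrier G"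
    and g0: "g 0 = \<one>\<^bsub>G\<^esub>"
    and cosets: "\<forall>x \<in> carrier G. \<exists>!i. i < m \<and> x \<in> g i <#\<^bsub>G\<^esub> H"
begin

interpretation G: group G by (rule grp)

abbreviation "\<rho> \<equiv> ind_rep G H \<sigma> g m d"

lemma H_sub: "H \<subseteq> carrier G" using sub by (rule subgroup.subset)

lemma coset_iff:
  assumes "x \<in> carrier G" "y \<in> carrier G"
  shows "x \<in> y <#\<^bsub>G\<^esub> H \<longleftrightarrow> inv\<^bsub>G\<^esub> y \<otimes>\<^bsub>G\<^esub> x \<in> H"
proof
  assume "x \<in> y <#\<^bsub>G\<^esub> H"
  then obtain h where h: "h \<in> H" "x = y \<otimes>\<^bsub>G\<^esub> h" unfolding l_coset_def by auto
  then have "inv\<^bsub>G\<^esub> y \<otimes>\<^bsub>G\<^esub> x = h" using assms H_sub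
    by (metis G.inv_solve_left' G.m_closed subsetD)
  then show "inv\<^bsub>G\<^esub> y \<otimes>\<^bsub>G\<^esub> x \<in> H" using h by simp
next
  assume a: "inv\<^bsub>G\<^esub> y \<otimes>\<^bsub>G\<^esub> x \<in> H"
  have "x = y \<otimes>\<^bsub>G\<^esub> (inv\<^bsub>G\<^esub> y \<otimes>\<^bsub>G\<^esub> x)" using assms
    by (simp add: G.m_assoc[symmetric])
  then show "x \<in> y <#\<^bsub>G\<^esub> H" using a unfolding l_coset_def by blast
qed

lemma coset_uniq:
  assumes "z \<in> carrier G" "l < m" "l' < m"
    "inv\<^bsub>G\<^esub> (g l) \<otimes>\<^bsub>G\<^esub> z \<in> H" "inv\<^bsub>G\<^esub> (g l') \<otimes>\<^bsub>G\<^esub> z \<in> H"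
  shows "l = l'"
proof -
  have "z \<in> g l <#\<^bsub>G\<^esub> H" "z \<in> g l' <#\<^bsub>G\<^esub> H"
    using assms coset_iff g_carrier by auto
  then show ?thesis using cosets assms(1-3) by blast
qed

lemma rho_carrier: "\<rho> x \<in> carrier_mat (m*d) (m*d)"
  unfolding ind_rep_def by simp

lemma rho_entry:
  assumes "r < m*d" "c < m*d"
  shows "\<rho> x $$ (r,c) = (if inv\<^bsub>G\<^esub> (g (r div d)) \<otimes>\<^bsub>G\<^esub> x \<otimes>\<^bsub>G\<^esub> g (c div d) \<in> H
     then \<sigma> (inv\<^bsub>G\<^esub> (g (r div d)) \<otimes>\<^bsub>G\<^esub> x \<otimes>\<^bsub>G\<^esub> g (c div d)) $$ (r mod d, c mod d) else 0)"
  unfolding ind_rep_def using assms by (simp add: Let_def)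

lemma div_lt: "r < m*d \<Longrightarrow> r div d < m"
  by (simp add: less_mult_imp_div_less)

lemma idx_lt: "l < m \<Longrightarrow> e < d \<Longrightarrow> l*d + e < m*d"
proof -
  assume "l < m" "e < d"
  then have "l*d + e < (l+1)*d" by simp
  also have "\<dots> \<le> m*d" by (rule mult_le_mono1) (use \<open>l<m\<close> in simp)
  finally show ?thesis .
qed

lemma sum_block:
  fixes F :: "nat \<Rightarrow> 'a::comm_monoid_add"
  assumes "l < m" "\<And>k. k < m*d \<Longrightarrow> k div d \<noteq> l \<Longrightarrow> F k = 0"
  shows "(\<Sum>k = 0..<m*d. F k) = (\<Sum>e = 0..<d. F (l*d+e))"
proof -
  have "(\<Sum>k = 0..<m*d. F k) = (\<Sum>k \<in> (\<lambda>e. l*d+e) ` {0..<d}. F k)"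
  proof (rule sum.mono_neutral_right)
    show "(\<lambda>e. l*d+e) ` {0..<d} \<subseteq> {0..<m*d}" 
    proof (rule image_subsetI)
      fix e assume "e \<in> {0..<d}" then show "l*d+e \<in> {0..<m*d}" using idx_lt[OF assms(1), of e] by simp
    qed
    show "\<forall>i\<in>{0..<m * d} - (\<lambda>e. l * d + e) ` {0..<d}. F i = 0"
    proof
      fix k assume k: "k \<in> {0..<m * d} - (\<lambda>e. l * d + e) ` {0..<d}"
      have "k div d \<noteq> l"
      proof
        assume "k div d = l"
        then have "k = l*d + k mod d" by (metis mult.commute div_mult_mod_eq)
        moreover have "k mod d < d" using k by (cases "d = 0") auto
        ultimately show False using k by auto
      qed
      then show "F k = 0" using assms(2) k by auto
    qed
  qed simp
  also have "\<dots> = (\<Sum>e = 0..<d. F (l*d+e))"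
    by (subst sum.reindex) (auto simp: inj_on_def)
  finally show ?thesis .
qed

lemma rho_mult:
  assumes x: "x \<in> carrier G" and z: "z \<in> carrier G"
  shows "\<rho> (x \<otimes>\<^bsub>G\<^esub> z) = \<rho> x * \<rho> z"
proof (rule eq_matI)
  show "dim_row (\<rho> (x \<otimes>\<^bsub>G\<^esub> z)) = dim_row (\<rho> x * \<rho> z)"
       "dim_col (\<rho> (x \<otimes>\<^bsub>G\<^esub> z)) = dim_col (\<rho> x * \<rho> z)"
    by (simp_all add: ind_rep_def)
  fix r c assume "r < dim_row (\<rho> x * \<rho> z)" "c < dim_col (\<rho> x * \<rho> z)"
  then have r: "r < m*d" and c: "c < m*d" by (simp_all add: ind_rep_def)
  define j where "j = r div d"
  define i where "i = c div d"
  define a where "a = r mod d"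
  define b where "b = c mod d"
  have dpos: "d > 0" using r by (cases d) auto
  have jm: "j < m" "i < m" using div_lt r c unfolding j_def i_def by auto
  have ab: "a < d" "b < d" using dpos unfolding a_def b_def by auto
  have gi: "g i \<in> carrier G" "g j \<in> carrier G" using jm g_carrier by auto
  have zgi: "z \<otimes>\<^bsub>G\<^esub> g i \<in> carrier G" using z gi by simp
  obtain l where l: "l < m" "z \<otimes>\<^bsub>G\<^esub> g i \<in> g l <#\<^bsub>G\<^esub> H" using cosets zgi by blast
  have gl: "g l \<in> carrier G" using l g_carrier by auto
  define h2 where "h2 = inv\<^bsub>G\<^esub> (g l) \<otimes>\<^bsub>G\<^esub> z \<otimes>\<^bsub>G\<^esub> g i"
  have h2H: "h2 \<in> H" using coset_iff[OF zgi gl] l z gi gl unfolding h2_def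
    by (simp add: G.m_assoc)
  define h1 where "h1 = inv\<^bsub>G\<^esub> (g j) \<otimes>\<^bsub>G\<^esub> x \<otimes>\<^bsub>G\<^esub> g l"
  have h1c: "h1 \<in> carrier G" unfolding h1_def using gi gl x by simp
  have h2c: "h2 \<in> carrier G" using h2H H_sub by auto
  have prod: "inv\<^bsub>G\<^esub> (g j) \<otimes>\<^bsub>G\<^esub> (x \<otimes>\<^bsub>G\<^esub> z) \<otimes>\<^bsub>G\<^esub> g i = h1 \<otimes>\<^bsub>G\<^esub> h2"
    unfolding h1_def h2_def using gi gl x z
    by (simp add: G.m_assoc G.r_inv[symmetric] del: G.r_inv)
      (metis G.inv_closed G.l_one G.m_assoc G.m_closed G.r_inv)
  have iff: "h1 \<otimes>\<^bsub>G\<^esub> h2 \<in> H \<longleftrightarrow> h1 \<in> H"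
  proof
    assume "h1 \<in> H" then show "h1 \<otimes>\<^bsub>G\<^esub> h2 \<in> H" using h2H sub by (simp add: subgroup.m_closed)
  next
    assume a1: "h1 \<otimes>\<^bsub>G\<^esub> h2 \<in> H"
    have "h1 = (h1 \<otimes>\<^bsub>G\<^esub> h2) \<otimes>\<^bsub>G\<^esub> inv\<^bsub>G\<^esub> h2" using h1c h2c
      by (simp add: G.m_assoc)
    then show "h1 \<in> H" using a1 h2H sub by (metis subgroup.m_closed subgroup.m_inv_closed)
  qed
  have "(\<rho> x * \<rho> z) $$ (r,c) = (\<Sum>k = 0..<m*d. \<rho> x $$ (r,k) * \<rho> z $$ (k,c))"
    using r c rho_carrier[of x] rho_carrier[of z]
    by (simp add: index_mult_mat scalar_prod_def)
  also have "\<dots> = (\<Sum>e = 0..<d. \<rho> x $$ (r,l*d+e) * \<rho> z $$ (l*d+e,c))"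
  proof (rule sum_block[OF l(1)])
    fix k assume k: "k < m*d" "k div d \<noteq> l"
    have "inv\<^bsub>G\<^esub> (g (k div d)) \<otimes>\<^bsub>G\<^esub> z \<otimes>\<^bsub>G\<^esub> g (c div d) \<notin> H"
    proof
      assume a1: "inv\<^bsub>G\<^esub> (g (k div d)) \<otimes>\<^bsub>G\<^esub> z \<otimes>\<^bsub>G\<^esub> g (c div d) \<in> H"
      have gk: "g (k div d) \<in> carrier G" using div_lt k g_carrier by auto
      have e1: "inv\<^bsub>G\<^esub> (g (k div d)) \<otimes>\<^bsub>G\<^esub> (z \<otimes>\<^bsub>G\<^esub> g i) \<in> H"
        using a1 gk gi z by (simp add: G.m_assoc i_def)
      have e2: "inv\<^bsub>G\<^esub> (g l) \<otimes>\<^bsub>G\<^esub> (z \<otimes>\<^bsub>G\<^esub> g i) \<in> H"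
        using h2H gl gi z unfolding h2_def by (metis G.inv_closed G.m_assoc)
      have "k div d = l"
        by (rule coset_uniq[OF zgi div_lt[OF k(1)] l(1) e1 e2])
      then show False using k by simp
    qed
    then show "\<rho> x $$ (r,k) * \<rho> z $$ (k,c) = 0" using rho_entry[OF k(1) c] by simp
  qed
  also have "\<dots> = (\<Sum>e = 0..<d. (if h1 \<in> H then \<sigma> h1 $$ (a,e) * \<sigma> h2 $$ (e,b) else 0))"
  proof (rule sum.cong[OF refl])
    fix e assume "e \<in> {0..<d}"
    then have e: "e < d" by simp
    have le: "l*d+e < m*d" using idx_lt[OF l(1) e] .
    have "(l*d+e) div d = l" "(l*d+e) mod d = e" using e by auto
    then show "\<rho> x $$ (r,l*d+e) * \<rho> z $$ (l*d+e,c) =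
      (if h1 \<in> H then \<sigma> h1 $$ (a,e) * \<sigma> h2 $$ (e,b) else 0)"
      using rho_entry[OF r le, of x] rho_entry[OF le c, of z] h2H
      unfolding h1_def h2_def j_def i_def a_def b_def by simp
  qed
  also have "\<dots> = \<rho> (x \<otimes>\<^bsub>G\<^esub> z) $$ (r,c)"
  proof (cases "h1 \<in> H")
    case True
    have s1: "\<sigma> h1 \<in> carrier_mat d d" "\<sigma> h2 \<in> carrier_mat d d" using rep_dim True h2H by auto
    have "\<sigma> (h1 \<otimes>\<^bsub>G\<^esub> h2) $$ (a,b) = (\<Sum>e = 0..<d. \<sigma> h1 $$ (a,e) * \<sigma> h2 $$ (e,b))"
      using rep_mult True h2H s1 ab by (simp add: index_mult_mat scalar_prod_def)
    then show ?thesis using True rho_entry[OF r c, of "x \<otimes>\<^bsub>G\<^esub> z"] prod iff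
      unfolding j_def i_def a_def b_def by simp
  next
    case False
    then show ?thesis using rho_entry[OF r c, of "x \<otimes>\<^bsub>G\<^esub> z"] prod iff
      unfolding j_def i_def a_def b_def by simp
  qed
  finally show "\<rho> (x \<otimes>\<^bsub>G\<^esub> z) $$ (r,c) = (\<rho> x * \<rho> z) $$ (r,c)" by simp
qed

lemma rho_one: "\<rho> \<one>\<^bsub>G\<^esub> = 1\<^sub>m (m*d)"
proof (rule eq_matI)
  show "dim_row (\<rho> \<one>\<^bsub>G\<^esub>) = dim_row (1\<^sub>m (m*d))" "dim_col (\<rho> \<one>\<^bsub>G\<^esub>) = dim_col (1\<^sub>m (m*d))"
    by (simp_all add: ind_rep_def)
  fix r c assume "r < dim_row (1\<^sub>m (m*d))" "c < dim_col (1\<^sub>m (m*d))"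
  then have r: "r < m*d" and c: "c < m*d" by auto
  define j where "j = r div d"
  define i where "i = c div d"
  have dpos: "d > 0" using r by (cases d) auto
  have jm: "j < m" "i < m" using div_lt r c unfolding j_def i_def by auto
  have gi: "g i \<in> carrier G" "g j \<in> carrier G" using jm g_carrier by auto
  have eq: "inv\<^bsub>G\<^esub> (g j) \<otimes>\<^bsub>G\<^esub> \<one>\<^bsub>G\<^esub> \<otimes>\<^bsub>G\<^esub> g i = inv\<^bsub>G\<^esub> (g j) \<otimes>\<^bsub>G\<^esub> g i"
    using gi by simp
  have iffH: "inv\<^bsub>G\<^esub> (g j) \<otimes>\<^bsub>G\<^esub> g i \<in> H \<longleftrightarrow> i = j"
  proof
    assume a: "inv\<^bsub>G\<^esub> (g j) \<otimes>\<^bsub>G\<^esub> g i \<in> H"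
    have "inv\<^bsub>G\<^esub> (g i) \<otimes>\<^bsub>G\<^esub> g i \<in> H" using gi sub by (simp add: subgroup.one_closed)
    then show "i = j" using coset_uniq[OF gi(1) jm(2) jm(1) _ a] by simp
  next
    assume "i = j" then show "inv\<^bsub>G\<^esub> (g j) \<otimes>\<^bsub>G\<^esub> g i \<in> H" using gi sub by (simp add: subgroup.one_closed)
  qed
  have rc: "r = c \<longleftrightarrow> (j = i \<and> r mod d = c mod d)" unfolding j_def i_def
    by (metis div_mult_mod_eq)
  show "\<rho> \<one>\<^bsub>G\<^esub> $$ (r,c) = 1\<^sub>m (m*d) $$ (r,c)"
  proof (cases "i = j")
    case True
    have "inv\<^bsub>G\<^esub> (g j) \<otimes>\<^bsub>G\<^esub> g i = \<one>\<^bsub>G\<^esub>" using True gi by simp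
    then show ?thesis using rho_entry[OF r c, of "\<one>\<^bsub>G\<^esub>"] eq iffH True rep_one r c dpos rc
      unfolding j_def[symmetric] i_def[symmetric] by auto
  next
    case False
    then show ?thesis using rho_entry[OF r c, of "\<one>\<^bsub>G\<^esub>"] eq iffH r c rc
      unfolding j_def[symmetric] i_def[symmetric] by auto
  qed
qed

lemma rho_pow: "x \<in> carrier G \<Longrightarrow> \<rho> (x [^]\<^bsub>G\<^esub> (n::nat)) = \<rho> x ^\<^sub>m n"
proof (induction n)
  case 0
  then show ?case using rho_one rho_carrier[of x] by simp
next
  case (Suc n)
  then show ?case by (simp add: rho_mult)
qed

lemma rho_entry_block:
  assumes j: "j < m" and a: "a < d" and b: "b < d" and x: "x \<in> carrier G"
  shows "\<rho> x $$ (j*d+a, b) = (if x \<in> g j <#\<^bsub>G\<^esub> H then \<sigma> (inv\<^bsub>G\<^esub> (g j) \<otimes>\<^bsub>G\<^esub> x) $$ (a,b) else 0)"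
proof -
  have m0: "0 < m" using j by simp
  have l1: "j*d+a < m*d" using idx_lt[OF j a] .
  have l2: "b < m*d" using idx_lt[OF m0 b] by simp
  have gj: "g j \<in> carrier G" using j g_carrier by auto
  have dv: "(j*d+a) div d = j" "(j*d+a) mod d = a" "b div d = 0" "b mod d = b" using a b by auto
  have y: "inv\<^bsub>G\<^esub> (g j) \<otimes>\<^bsub>G\<^esub> x \<otimes>\<^bsub>G\<^esub> g 0 = inv\<^bsub>G\<^esub> (g j) \<otimes>\<^bsub>G\<^esub> x"
    using gj x g0 by simp
  show ?thesis using rho_entry[OF l1 l2, of x] dv y coset_iff[OF x gj] by simp
qed

lemma block_proj_rho_out:
  assumes j: "j < m" and x: "x \<in> carrier G" and nx: "x \<notin> g j <#\<^bsub>G\<^esub> H"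
  shows "block_proj d 0 j (\<rho> x) = 0\<^sub>m d d"
  by (rule eq_matI) (use rho_entry_block[OF j _ _ x] nx in \<open>auto simp: block_proj_def\<close>)

lemma block_proj_rho_in:
  assumes j: "j < m" and x: "x \<in> carrier G" and ix: "x \<in> g j <#\<^bsub>G\<^esub> H"
  shows "block_proj d 0 j (\<rho> x) = \<sigma> (inv\<^bsub>G\<^esub> (g j) \<otimes>\<^bsub>G\<^esub> x)"
proof -
  have gj: "g j \<in> carrier G" using j g_carrier by auto
  have "inv\<^bsub>G\<^esub> (g j) \<otimes>\<^bsub>G\<^esub> x \<in> H" using coset_iff[OF x gj] ix by simp
  then have "\<sigma> (inv\<^bsub>G\<^esub> (g j) \<otimes>\<^bsub>G\<^esub> x) \<in> carrier_mat d d" using rep_dim by auto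
  then show ?thesis
    by (intro eq_matI) (use rho_entry_block[OF j _ _ x] ix in \<open>auto simp: block_proj_def\<close>)
qed

lemma sigma_nonzero:
  assumes h: "h \<in> H" and d: "d > 0"
  shows "\<exists>a<d. \<exists>b<d. \<sigma> h $$ (a,b) \<noteq> 0"
proof (rule ccontr)
  assume "\<not> ?thesis"
  then have z: "\<sigma> h = 0\<^sub>m d d" using rep_dim h by (intro eq_matI) auto
  have hi: "inv\<^bsub>G\<^esub> h \<in> H" using h sub by (simp add: subgroup.m_inv_closed)
  have hc: "h \<in> carrier G" using h H_sub by auto
  have "\<sigma> (h \<otimes>\<^bsub>G\<^esub> inv\<^bsub>G\<^esub> h) = \<sigma> h * \<sigma> (inv\<^bsub>G\<^esub> h)" using rep_mult h hi by auto
  then have "1\<^sub>m d = 0\<^sub>m d d * \<sigma> (inv\<^bsub>G\<^esub> h)" using hc rep_one z by simp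
  also have "\<dots> = 0\<^sub>m d d" using rep_dim hi by auto
  finally have "(1\<^sub>m d :: 'k mat) $$ (0,0) = (0\<^sub>m d d :: 'k mat) $$ (0,0)" by simp
  then show False using d by simp
qed

lemma coset_transfer:
  assumes d: "d > 0" and j: "j < m" and x: "x \<in> carrier G" and s: "s \<in> carrier G"
    and eq: "\<rho> s = \<rho> x" and ix: "x \<in> g j <#\<^bsub>G\<^esub> H"
  shows "s \<in> g j <#\<^bsub>G\<^esub> H"
proof -
  have gj: "g j \<in> carrier G" using j g_carrier by auto
  have "inv\<^bsub>G\<^esub> (g j) \<otimes>\<^bsub>G\<^esub> x \<in> H" using coset_iff[OF x gj] ix by simp
  then obtain a b where ab: "a < d" "b < d" "\<sigma> (inv\<^bsub>G\<^esub> (g j) \<otimes>\<^bsub>G\<^esub> x) $$ (a,b) \<noteq> 0"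
    using sigma_nonzero d by blast
  have "\<rho> x $$ (j*d+a, b) \<noteq> 0" using rho_entry_block[OF j ab(1,2) x] ix ab by simp
  then have "\<rho> s $$ (j*d+a, b) \<noteq> 0" using eq by simp
  then show ?thesis using rho_entry_block[OF j ab(1,2) s] by (auto split: if_splits)
qed

end


lemma pow_mat_add: "A \<in> carrier_mat n n \<Longrightarrow> A ^\<^sub>m (a + b) = A ^\<^sub>m a * A ^\<^sub>m b"
proof (induction b)
  case 0 then show ?case by simp
next
  case (Suc b)
  have "A ^\<^sub>m (a + Suc b) = (A ^\<^sub>m a * A ^\<^sub>m b) * A" using Suc by simp
  also have "\<dots> = A ^\<^sub>m a * (A ^\<^sub>m b * A)"
    by (rule assoc_mult_mat[of _ n n _ n _ n]) (use Suc.prems in auto)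
  finally show ?case by simp
qed

lemma pow_mat_mult: "A \<in> carrier_mat n n \<Longrightarrow> A ^\<^sub>m (a * b) = (A ^\<^sub>m a) ^\<^sub>m b"
proof (induction b)
  case 0 then show ?case by simp
next
  case (Suc b)
  have "A ^\<^sub>m (a * Suc b) = A ^\<^sub>m (a * b + a)" by (simp add: add.commute)
  also have "\<dots> = A ^\<^sub>m (a * b) * A ^\<^sub>m a" by (rule pow_mat_add[OF Suc.prems])
  finally show ?case using Suc by simp
qed

lemma pow_mat_one: "(1\<^sub>m n :: 'a::semiring_1 mat) ^\<^sub>m k = 1\<^sub>m n"
  by (induction k) auto

lemma diag_pow:
  assumes D: "D \<in> carrier_mat n n" and dg: "diagonal_mat D"
  shows "D ^\<^sub>m k = mat n n (\<lambda>(i,j). if i = j then D $$ (i,i) ^ k else 0)"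
proof (induction k)
  case 0 then show ?case using D by (intro eq_matI) auto
next
  case (Suc k)
  show ?case
  proof (rule eq_matI)
    fix i j assume ij: "i < dim_row (mat n n (\<lambda>(i,j). if i = j then D $$ (i,i) ^ Suc k else 0))"
      "j < dim_col (mat n n (\<lambda>(i,j). if i = j then D $$ (i,i) ^ Suc k else 0))"
    then have i: "i < n" and j: "j < n" by auto
    have "(D ^\<^sub>m Suc k) $$ (i,j) = (\<Sum>l = 0..<n. (if i = l then D $$ (i,i) ^ k else 0) * D $$ (l,j))"
      using Suc D i j by (simp add: index_mult_mat scalar_prod_def)
    also have "\<dots> = (\<Sum>l = 0..<n. if l = i then D $$ (i,i) ^ k * D $$ (i,j) else 0)"
      by (rule sum.cong) auto
    also have "\<dots> = D $$ (i,i) ^ k * D $$ (i,j)"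
      using i by simp
    also have "\<dots> = (if i = j then D $$ (i,i) ^ Suc k else 0)"
      using dg D i j unfolding diagonal_mat_def by (auto simp: power_commutes)
    finally show "(D ^\<^sub>m Suc k) $$ (i,j) = mat n n (\<lambda>(i,j). if i = j then D $$ (i,i) ^ Suc k else 0) $$ (i,j)"
      using i j by simp
  qed (use D in auto)
qed

lemma frob_root:
  fixes \<mu> :: "'k::field"
  assumes "CHAR('k) = p" "prime p" "\<mu> ^ (p ^ a) = 1"
  shows "\<mu> = 1"
proof -
  have "((\<mu> - 1) + 1) ^ (p ^ a) = (\<mu> - 1) ^ (p ^ a) + 1 ^ (p ^ a)"
    by (rule freshmans_dream') (use assms in auto)
  then have "(\<mu> - 1) ^ (p ^ a) = 0" using assms by simp
  then show ?thesis by simp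
qed

lemma ss_pow_one:
  fixes A :: "'k::field mat"
  assumes A: "A \<in> carrier_mat n n" and ss: "semisimple_mat A"
    and N: "A ^\<^sub>m (p ^ a * n') = 1\<^sub>m n" and char: "CHAR('k) = p" and pr: "prime p"
  shows "A ^\<^sub>m n' = 1\<^sub>m n"
proof -
  obtain D where dg: "diagonal_mat D" and sim: "similar_mat A D" using ss unfolding semisimple_mat_def by auto
  obtain P Q where w: "similar_mat_wit A D P Q" using sim unfolding similar_mat_def by auto
  have c: "D \<in> carrier_mat n n" "P \<in> carrier_mat n n" "Q \<in> carrier_mat n n"
    and PQ: "P * Q = 1\<^sub>m n" "Q * P = 1\<^sub>m n"
    using w A unfolding similar_mat_wit_def Let_def by auto
  have pw: "\<And>k. A ^\<^sub>m k = P * D ^\<^sub>m k * Q" using similar_mat_wit_pow_id[OF w] by simp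
  have DN: "D ^\<^sub>m k = Q * A ^\<^sub>m k * P" for k
  proof -
    have "Q * A ^\<^sub>m k * P = Q * (P * D ^\<^sub>m k * Q) * P" using pw by simp
    also have "\<dots> = (Q * (P * D ^\<^sub>m k) * Q) * P"
      by (subst assoc_mult_mat[of Q n n _ n Q n]) (use c in auto)
    also have "\<dots> = Q * (P * D ^\<^sub>m k) * (Q * P)"
      by (rule assoc_mult_mat[of _ n n]) (use c in auto)
    also have "\<dots> = Q * (P * D ^\<^sub>m k)" using PQ c by simp
    also have "\<dots> = (Q * P) * D ^\<^sub>m k"
      by (rule assoc_mult_mat[of _ n n _ n _ n, symmetric]) (use c in auto)
    also have "\<dots> = D ^\<^sub>m k" using PQ c by simp
    finally show ?thesis by simp
  qed
  have D1: "D ^\<^sub>m (p ^ a * n') = 1\<^sub>m n" using DN[of "p ^ a * n'"] N PQ c by simp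
  have ent: "D $$ (i,i) ^ n' = 1" if i: "i < n" for i
  proof -
    have "D $$ (i,i) ^ (p ^ a * n') = 1"
      using arg_cong[OF D1, of "\<lambda>M. M $$ (i,i)"] diag_pow[OF c(1) dg] i by simp
    then have "(D $$ (i,i) ^ n') ^ (p ^ a) = 1" by (simp add: power_mult[symmetric] mult.commute)
    then show ?thesis using frob_root char pr by blast
  qed
  have "D ^\<^sub>m n' = 1\<^sub>m n"
    by (rule eq_matI) (use ent diag_pow[OF c(1) dg] in auto)
  then show ?thesis using pw[of n'] PQ c by simp
qed



context indrep begin
interpretation G: group G by (rule grp)

lemma p_part:
  assumes fin: "finite (carrier G)" and char: "CHAR('k) = p" and pr: "prime p"
    and x: "x \<in> carrier G" and ss: "semisimple_mat (\<rho> x)"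
  shows "\<exists>s \<in> carrier G. \<rho> s = \<rho> x \<and> coprime (group.ord G s) p"
proof -
  define N where "N = G.ord x"
  have Npos: "N \<noteq> 0" using G.ord_ge_1[OF fin x] unfolding N_def by simp
  define a where "a = multiplicity p N"
  define n' where "n' = N div p ^ a"
  have Ndec: "N = p ^ a * n'" using multiplicity_dvd[of p N] unfolding a_def n'_def by simp
  have nu: "\<not> is_unit p" using pr not_prime_unit by blast
  have ndvd: "\<not> p dvd n'" using multiplicity_decompose[OF Npos nu] unfolding a_def n'_def .
  have cop: "coprime n' p" using prime_imp_coprime[OF pr ndvd] by (simp add: coprime_commute)
  have cop2: "coprime (p ^ a) n'" using cop by (simp add: coprime_commute)
  have pa: "p ^ a \<noteq> 0" using pr by (simp add: prime_gt_0_nat)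
  obtain u v where uv: "p ^ a * u = n' * v + 1"
    using bezout_nat[OF pa, of n'] cop2 by (auto simp: coprime_iff_gcd_eq_1)
  define s where "s = x [^]\<^bsub>G\<^esub> (p ^ a * u)"
  have sc: "s \<in> carrier G" unfolding s_def using x by simp
  define A where "A = \<rho> x"
  have Ac: "A \<in> carrier_mat (m*d) (m*d)" unfolding A_def by (rule rho_carrier)
  have AN: "A ^\<^sub>m (p ^ a * n') = 1\<^sub>m (m*d)"
    using rho_pow[OF x, of N] G.pow_ord_eq_1[OF x] rho_one Ndec unfolding A_def N_def by simp
  have An: "A ^\<^sub>m n' = 1\<^sub>m (m*d)" by (rule ss_pow_one[OF Ac ss[folded A_def] AN char pr])
  have "\<rho> s = A ^\<^sub>m (n' * v + 1)" unfolding s_def A_def rho_pow[OF x] uv by (rule refl)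
  also have "\<dots> = (A ^\<^sub>m n') ^\<^sub>m v * A ^\<^sub>m 1" using pow_mat_add[OF Ac] pow_mat_mult[OF Ac] by simp
  also have "\<dots> = A" using An Ac by (simp add: pow_mat_one)
  finally have rs: "\<rho> s = \<rho> x" unfolding A_def .
  have "s [^]\<^bsub>G\<^esub> n' = x [^]\<^bsub>G\<^esub> (N * u)" unfolding s_def using x Ndec
    by (simp add: G.nat_pow_pow mult.commute mult.left_commute)
  also have "\<dots> = \<one>\<^bsub>G\<^esub>" using x unfolding N_def by (simp add: G.nat_pow_pow[symmetric])
  finally have "G.ord s dvd n'" using G.pow_eq_id[OF sc] by simp
  then obtain k where "n' = G.ord s * k" by blast
  then have "coprime (G.ord s) p" using cop by simp
  then show ?thesis using sc rs by blast
qed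

end


lemma foldr_carrier:
  "set (map snd xs) \<subseteq> carrier_mat n n \<Longrightarrow>
   foldr (\<lambda>(c, A) B. c \<cdot>\<^sub>m A + B) xs (0\<^sub>m n n) \<in> carrier_mat n n"
  by (induction xs) auto

context indrep begin

lemma bp_lin:
  assumes A: "A \<in> carrier_mat (m*d) (m*d)" and B: "B \<in> carrier_mat (m*d) (m*d)" and j: "j < m"
  shows "block_proj d 0 j (c \<cdot>\<^sub>m A + B) = c \<cdot>\<^sub>m block_proj d 0 j A + block_proj d 0 j B"
proof (rule eq_matI)
  fix r s assume "r < dim_row (c \<cdot>\<^sub>m block_proj d 0 j A + block_proj d 0 j B)"
    "s < dim_col (c \<cdot>\<^sub>m block_proj d 0 j A + block_proj d 0 j B)"
  then have r: "r < d" and s: "s < d" by (auto simp: block_proj_def)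
  have "j*d + r < m*d" "s < m*d" using idx_lt[OF j r] idx_lt[of 0 s] j s by auto
  then show "block_proj d 0 j (c \<cdot>\<^sub>m A + B) $$ (r, s) =
    (c \<cdot>\<^sub>m block_proj d 0 j A + block_proj d 0 j B) $$ (r, s)"
    using A B r s by (simp add: block_proj_def)
qed (auto simp: block_proj_def)

lemma bp_zero: "block_proj d 0 j (0\<^sub>m (m*d) (m*d)) = (0\<^sub>m d d :: 'k mat) \<or> j \<ge> m"
proof (cases "j < m")
  case True
  have "block_proj d 0 j (0\<^sub>m (m*d) (m*d)) = (0\<^sub>m d d :: 'k mat)"
  proof (rule eq_matI)
    fix r s assume "r < dim_row (0\<^sub>m d d :: 'k mat)" "s < dim_col (0\<^sub>m d d :: 'k mat)"
    then have r: "r < d" and s: "s < d" by auto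
    have "j*d + r < m*d" "s < m*d" using idx_lt[OF True r] idx_lt[of 0 s] True s by auto
    then show "block_proj d 0 j (0\<^sub>m (m*d) (m*d)) $$ (r, s) = (0\<^sub>m d d :: 'k mat) $$ (r, s)"
      using r s by (simp add: block_proj_def)
  qed (auto simp: block_proj_def)
  then show ?thesis by simp
qed simp

lemma span_ind:
  assumes fin: "finite (carrier G)" and char: "CHAR('k) = p" and pr: "prime p"
    and j: "j < m" and d: "d > 0"
  shows "set (map snd xs) \<subseteq> {\<rho> x | x. x \<in> carrier G \<and> semisimple_mat (\<rho> x)} \<Longrightarrow>
    in_span_mat d {block_proj d 0 j (\<rho> x) | x.
              x \<in> carrier G \<and> x \<in> g j <#\<^bsub>G\<^esub> H \<and> coprime (group.ord G x) p}
     (block_proj d 0 j (foldr (\<lambda>(c, A) B. c \<cdot>\<^sub>m A + B) xs (0\<^sub>m (m*d) (m*d))))"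
proof (induction xs)
  case Nil
  show ?case unfolding in_span_mat_def using bp_zero[of j] j
    by (intro exI[of _ "[]"]) auto
next
  case (Cons ca xs)
  obtain c A where ca: "ca = (c, A)" by fastforce
  let ?S = "{block_proj d 0 j (\<rho> x) | x.
              x \<in> carrier G \<and> x \<in> g j <#\<^bsub>G\<^esub> H \<and> coprime (group.ord G x) p}"
  have Sc: "?S \<subseteq> carrier_mat d d" by (auto simp: block_proj_def)
  obtain x where x: "x \<in> carrier G" "semisimple_mat (\<rho> x)" "A = \<rho> x" using Cons.prems ca by auto
  define F where "F = foldr (\<lambda>(c, A) B. c \<cdot>\<^sub>m A + B) xs (0\<^sub>m (m*d) (m*d))"
  have Fc: "F \<in> carrier_mat (m*d) (m*d)" unfolding F_def
    by (rule foldr_carrier) (use Cons.prems rho_carrier in auto)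
  obtain ys where ys: "set (map snd ys) \<subseteq> ?S" "block_proj d 0 j F = foldr (\<lambda>(c, A) B. c \<cdot>\<^sub>m A + B) ys (0\<^sub>m d d)"
    using Cons unfolding in_span_mat_def F_def by auto
  have ysc: "foldr (\<lambda>(c, A) B. c \<cdot>\<^sub>m A + B) ys (0\<^sub>m d d) \<in> carrier_mat d d"
    by (rule foldr_carrier) (use ys(1) Sc in auto)
  have eq: "block_proj d 0 j (foldr (\<lambda>(c, A) B. c \<cdot>\<^sub>m A + B) (ca # xs) (0\<^sub>m (m*d) (m*d)))
     = c \<cdot>\<^sub>m block_proj d 0 j A + block_proj d 0 j F"
    using bp_lin[OF _ Fc j, of A c] x rho_carrier ca unfolding F_def by simp
  show ?case
  proof (cases "x \<in> g j <#\<^bsub>G\<^esub> H")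
    case True
    obtain s where s: "s \<in> carrier G" "\<rho> s = \<rho> x" "coprime (group.ord G s) p"
      using p_part[OF fin char pr x(1,2)] by blast
    have "s \<in> g j <#\<^bsub>G\<^esub> H" using coset_transfer[OF d j x(1) s(1,2) True] .
    moreover have "block_proj d 0 j A = block_proj d 0 j (\<rho> s)" using s x by simp
    ultimately have "block_proj d 0 j A \<in> ?S" using s by blast
    then show ?thesis unfolding in_span_mat_def using eq ys
      by (intro exI[of _ "(c, block_proj d 0 j A) # ys"]) auto
  next
    case False
    have "block_proj d 0 j A = 0\<^sub>m d d" using block_proj_rho_out[OF j x(1) False] x by simp
    then have "block_proj d 0 j (foldr (\<lambda>(c, A) B. c \<cdot>\<^sub>m A + B) (ca # xs) (0\<^sub>m (m*d) (m*d)))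
      = foldr (\<lambda>(c, A) B. c \<cdot>\<^sub>m A + B) ys (0\<^sub>m d d)" using eq ys ysc by simp
    then show ?thesis unfolding in_span_mat_def using ys by blast
  qed
qed

end

theorem lemma5p1:
  fixes G :: "('g, 'b) monoid_scheme" and H :: "'g set"
    and \<sigma> :: "'g \<Rightarrow> 'k::alg_closed_field mat"
    and g :: "nat \<Rightarrow> 'g" and m d p :: nat
  assumes char: "CHAR('k) = p" and p_prime: "prime p"
    and grp: "group G" and fin: "finite (carrier G)"
    and sub: "subgroup H G"
    and rep_dim: "\<forall>h \<in> H. \<sigma> h \<in> carrier_mat d d"
    and rep_one: "\<sigma> \<one>\<^bsub>G\<^esub> = 1\<^sub>m d"
    and rep_mult: "\<forall>h1 \<in> H. \<forall>h2 \<in> H. \<sigma> (h1 \<otimes>\<^bsub>G\<^esub> h2) = \<sigma> h1 * \<sigma> h2"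
    and g_carrier: "\<forall>i < m. g i \<in> carrier G"
    and g0: "g 0 = \<one>\<^bsub>G\<^esub>"
    and cosets: "\<forall>x \<in> carrier G. \<exists>!i. i < m \<and> x \<in> g i <#\<^bsub>G\<^esub> H"
    and wa: "weakly_adequate G (m * d) (ind_rep G H \<sigma> g m d)"
  shows "\<forall>j < m. spans_mat d
           {block_proj d 0 j (ind_rep G H \<sigma> g m d x) | x.
              x \<in> carrier G \<and> x \<in> g j <#\<^bsub>G\<^esub> H \<and> coprime (group.ord G x) p}"
proof (intro allI impI)
  fix j assume j: "j < m"
  interpret I: indrep G H \<sigma> g m d
    by (rule indrep.intro[OF grp sub rep_dim rep_one rep_mult g_carrier g0 cosets])
  show "spans_mat d {block_proj d 0 j (ind_rep G H \<sigma> g m d x) | x.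
              x \<in> carrier G \<and> x \<in> g j <#\<^bsub>G\<^esub> H \<and> coprime (group.ord G x) p}"
    unfolding spans_mat_def
  proof
    fix M :: "'k mat" assume M: "M \<in> carrier_mat d d"
    show "in_span_mat d {block_proj d 0 j (ind_rep G H \<sigma> g m d x) | x.
              x \<in> carrier G \<and> x \<in> g j <#\<^bsub>G\<^esub> H \<and> coprime (group.ord G x) p} M"
    proof (cases "d = 0")
      case True
      have "M = 0\<^sub>m d d" using M True by (intro eq_matI) auto
      then show ?thesis unfolding in_span_mat_def by (intro exI[of _ "[]"]) auto
    next
      case False
      then have d: "d > 0" by simp
      define N :: "'k mat" where "N = mat (m*d) (m*d) (\<lambda>(r,c). if r div d = j \<and> c div d = 0 then M $$ (r mod d, c mod d) else 0)"
      have Nc: "N \<in> carrier_mat (m*d) (m*d)" unfolding N_def by simp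
      have bN: "block_proj d 0 j N = M"
      proof (rule eq_matI)
        fix r s assume "r < dim_row M" "s < dim_col M"
        then have r: "r < d" and s: "s < d" using M by auto
        have "j*d + r < m*d" "s < m*d" using I.idx_lt[OF j r] I.idx_lt[of 0 s] j s by auto
        moreover have "(j*d+r) div d = j" "(j*d+r) mod d = r" "s div d = 0" "s mod d = s" using r s by auto
        ultimately show "block_proj d 0 j N $$ (r, s) = M $$ (r, s)"
          using r s unfolding N_def block_proj_def by simp
      qed (use M in \<open>auto simp: block_proj_def\<close>)
      obtain xs where xs: "set (map snd xs) \<subseteq> {ind_rep G H \<sigma> g m d x | x. x \<in> carrier G \<and> semisimple_mat (ind_rep G H \<sigma> g m d x)}"
        "N = foldr (\<lambda>(c, A) B. c \<cdot>\<^sub>m A + B) xs (0\<^sub>m (m*d) (m*d))"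
        using wa Nc unfolding weakly_adequate_def spans_mat_def in_span_mat_def by blast
      show ?thesis using I.span_ind[OF fin char p_prime j d xs(1)] xs(2) bN by simp
    qed
  qed
qed

end
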